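(* Let $T$ be a tree with exactly three pendant vertices $u_1,u_2,u_3$, and let $m$ be its major vertex, with $d(u_1,m)\equiv d(u_2,m)\equiv 1\pmod 3$. Then $1$ is an eigenvalue of $L(T)$.
   Context: $L(T)=D(T)-A(T)$ is the Laplacian matrix of the tree $T$. A pendant vertex has degree $1$; a major vertex has degree at least $3$ (a tree with exactly three pendant vertices has exactly one major vertex). $d$ denotes distance. *)

theory Defs
  imports "Jordan_Normal_Form.Char_Poly"
begin

definition simple_graph :: "nat \<Rightarrow> (nat \<Rightarrow> nat \<Rightarrow> bool) \<Rightarrow> bool" where
  "simple_graph n E \<longleftrightarrow> (\<forall>i j. E i j \<longrightarrow> i < n \<and> j < n \<and> i \<noteq> j \<and> E j i)"

definition degree :: "nat \<Rightarrow> (nat \<Rightarrow> nat \<Rightarrow> bool) \<Rightarrow> nat \<Rightarrow> nat" where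
  "degree n E v = card {u. u < n \<and> E v u}"

text \<open>A walk is a nonempty list of vertices with consecutive vertices adjacent;
  its length (number of edges) is length - 1.\<close>
definition is_walk :: "nat \<Rightarrow> (nat \<Rightarrow> nat \<Rightarrow> bool) \<Rightarrow> nat list \<Rightarrow> bool" where
  "is_walk n E p \<longleftrightarrow> p \<noteq> [] \<and> (\<forall>v\<in>set p. v < n) \<and>
     (\<forall>i. Suc i < length p \<longrightarrow> E (p ! i) (p ! Suc i))"

definition connected_graph :: "nat \<Rightarrow> (nat \<Rightarrow> nat \<Rightarrow> bool) \<Rightarrow> bool" where
  "connected_graph n E \<longleftrightarrow>
     (\<forall>u v. u < n \<longrightarrow> v < n \<longrightarrow> (\<exists>p. is_walk n E p \<and> hd p = u \<and> last p = v))"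

definition is_cycle :: "nat \<Rightarrow> (nat \<Rightarrow> nat \<Rightarrow> bool) \<Rightarrow> nat list \<Rightarrow> bool" where
  "is_cycle n E c \<longleftrightarrow> is_walk n E c \<and> length c \<ge> 3 \<and> distinct c \<and> E (last c) (hd c)"

definition is_tree :: "nat \<Rightarrow> (nat \<Rightarrow> nat \<Rightarrow> bool) \<Rightarrow> bool" where
  "is_tree n E \<longleftrightarrow> simple_graph n E \<and> n \<ge> 1 \<and> connected_graph n E \<and> (\<nexists>c. is_cycle n E c)"

definition dist_graph :: "nat \<Rightarrow> (nat \<Rightarrow> nat \<Rightarrow> bool) \<Rightarrow> nat \<Rightarrow> nat \<Rightarrow> nat" where
  "dist_graph n E u v = (LEAST k. \<exists>p. is_walk n E p \<and> hd p = u \<and> last p = v \<and> length p = Suc k)"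

definition pendant :: "nat \<Rightarrow> (nat \<Rightarrow> nat \<Rightarrow> bool) \<Rightarrow> nat \<Rightarrow> bool" where
  "pendant n E v \<longleftrightarrow> v < n \<and> degree n E v = 1"

definition major :: "nat \<Rightarrow> (nat \<Rightarrow> nat \<Rightarrow> bool) \<Rightarrow> nat \<Rightarrow> bool" where
  "major n E v \<longleftrightarrow> v < n \<and> degree n E v \<ge> 3"

definition laplacian :: "nat \<Rightarrow> (nat \<Rightarrow> nat \<Rightarrow> bool) \<Rightarrow> real mat" where
  "laplacian n E = mat n n (\<lambda>(i, j). of_nat (if i = j then degree n E i else 0)
                                     - (if E i j then 1 else 0))"

end

theory Submission
  imports Defs
begin


locale tctx =
  fixes n :: nat and E :: "nat \<Rightarrow> nat \<Rightarrow> bool"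
  assumes tree: "is_tree n E"
begin

abbreviation D where "D u v \<equiv> dist_graph n E u v"

lemma sg: "E i j \<Longrightarrow> i < n \<and> j < n \<and> i \<noteq> j \<and> E j i"
  using tree unfolding is_tree_def simple_graph_def by blast

lemma conn: "u < n \<Longrightarrow> v < n \<Longrightarrow> \<exists>p. is_walk n E p \<and> hd p = u \<and> last p = v"
  using tree unfolding is_tree_def connected_graph_def by blast

lemma nocyc: "\<not> is_cycle n E c"
  using tree unfolding is_tree_def by blast

lemma walk_iff: "is_walk n E p \<longleftrightarrow> p \<noteq> [] \<and> set p \<subseteq> {..<n} \<and> successively E p"
  unfolding is_walk_def successively_conv_nth by auto

lemma walk_rev: "is_walk n E p \<Longrightarrow> is_walk n E (rev p)"
  unfolding walk_iff by (auto intro: successively_mono dest: sg)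

lemma walk_app: "is_walk n E p \<Longrightarrow> is_walk n E q \<Longrightarrow> E (last p) (hd q) \<Longrightarrow> is_walk n E (p @ q)"
  unfolding walk_iff by (auto simp: successively_append_iff)

lemma walk_app2: "is_walk n E p \<Longrightarrow> is_walk n E q \<Longrightarrow> last p = hd q \<Longrightarrow> is_walk n E (p @ tl q)"
proof -
  assume a: "is_walk n E p" "is_walk n E q" "last p = hd q"
  show ?thesis
  proof (cases "tl q = []")
    case True then show ?thesis using a by simp
  next
    case False
    then obtain x y ys where q: "q = x # y # ys" using a(2) unfolding is_walk_def
      by (metis list.exhaust_sel)
    have "is_walk n E (tl q)" using a(2) False unfolding walk_iff q by auto
    moreover have "E (last p) (hd (tl q))" using a(2,3) unfolding walk_iff q by auto
    ultimately show ?thesis using a walk_app by blast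
  qed
qed

lemma walk_take: "is_walk n E p \<Longrightarrow> 0 < j \<Longrightarrow> is_walk n E (take j p)"
  unfolding is_walk_def by (auto dest: in_set_takeD)

lemma walk_drop: "is_walk n E p \<Longrightarrow> j < length p \<Longrightarrow> is_walk n E (drop j p)"
  unfolding is_walk_def by (auto dest: in_set_dropD)

lemma dist_ex: assumes "u < n" "v < n"
  shows "\<exists>p. is_walk n E p \<and> hd p = u \<and> last p = v \<and> length p = Suc (D u v)"
proof -
  obtain p where p: "is_walk n E p" "hd p = u" "last p = v" using conn assms by blast
  then have "length p = Suc (length p - 1)" unfolding is_walk_def by (cases p) auto
  with p have "\<exists>k p. is_walk n E p \<and> hd p = u \<and> last p = v \<and> length p = Suc k" by blast
  then show ?thesis unfolding dist_graph_def by (rule LeastI_ex)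
qed

lemma dist_le: assumes "is_walk n E p" "hd p = u" "last p = v"
  shows "D u v \<le> length p - 1"
proof -
  have "length p = Suc (length p - 1)" using assms unfolding is_walk_def by (cases p) auto
  with assms show ?thesis unfolding dist_graph_def by (intro Least_le) metis
qed

lemma D_sym: assumes "u < n" "v < n" shows "D u v = D v u"
proof -
  have *: "D b a \<le> D a b" if ab: "a < n" "b < n" for a b
  proof -
    obtain p where p: "is_walk n E p" "hd p = a" "last p = b" "length p = Suc (D a b)"
      using dist_ex ab by blast
    have "D b a \<le> length (rev p) - 1"
      using p walk_rev[OF p(1)] by (intro dist_le) (auto simp: hd_rev last_rev)
    then show ?thesis using p by simp
  qed
  show ?thesis using *[of u v] *[of v u] assms by simp
qed

lemma D_tri: assumes "u < n" "v < n" "w < n" shows "D u w \<le> D u v + D v w"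
proof -
  obtain p where p: "is_walk n E p" "hd p = u" "last p = v" "length p = Suc (D u v)"
    using dist_ex assms by blast
  obtain q where q: "is_walk n E q" "hd q = v" "last q = w" "length q = Suc (D v w)"
    using dist_ex assms by blast
  have w: "is_walk n E (p @ tl q)" using walk_app2 p q by simp
  have "D u w \<le> length (p @ tl q) - 1"
    apply (rule dist_le[OF w])
    using p q unfolding is_walk_def by (cases q; auto simp: last_append)+
  then show ?thesis using p q by simp
qed

lemma D_edge: assumes "u < n" "E v w" shows "D u w \<le> D u v + 1"
proof -
  have "D v w \<le> 1"
    using dist_le[of "[v,w]" v w] assms sg unfolding is_walk_def by (auto simp: nth_Cons split: nat.splits)
  then show ?thesis using D_tri[of u v w] assms sg by force
qed

lemma D_zero: assumes "u < n" "v < n" "D u v = 0" shows "u = v"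
proof -
  obtain p where p: "is_walk n E p" "hd p = u" "last p = v" "length p = Suc (D u v)"
    using dist_ex assms by blast
  then obtain x where "p = [x]" using assms(3) by (cases p) auto
  then show ?thesis using p by simp
qed

lemma shortest_nth: assumes p: "is_walk n E p" "hd p = u" "length p = Suc (D u (last p))"
  and i: "i < length p" shows "D u (p ! i) = i"
proof -
  have pn: "set p \<subseteq> {..<n}" using p walk_iff by blast
  have un: "u < n" using p(1,2) pn hd_in_set unfolding is_walk_def by blast
  have pin: "p ! i < n" using pn i nth_mem by blast
  have ln: "last p < n" using pn p(1) unfolding is_walk_def by auto
  have "D u (p ! i) \<le> length (take (Suc i) p) - 1"
  proof (rule dist_le)
    show "is_walk n E (take (Suc i) p)" using p(1) by (rule walk_take) simp
    show "hd (take (Suc i) p) = u" using p(1,2) unfolding is_walk_def by (cases p) auto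
    show "last (take (Suc i) p) = p ! i" using i by (simp add: take_Suc_conv_app_nth)
  qed
  then have le: "D u (p ! i) \<le> i" using i by simp
  have "D (p ! i) (last p) \<le> length (drop i p) - 1"
    using p i by (intro dist_le walk_drop) (auto simp: hd_drop_conv_nth)
  then have "D (p!i) (last p) \<le> length p - 1 - i" by simp
  moreover have "D u (last p) \<le> D u (p!i) + D (p!i) (last p)" using D_tri un pin ln by blast
  ultimately show ?thesis using le p(3) i by linarith
qed

lemma shortest_distinct: assumes p: "is_walk n E p" "hd p = u" "length p = Suc (D u (last p))"
  shows "distinct p"
  unfolding distinct_conv_nth using shortest_nth[OF p] by metis


lemma in_set_drop_nth: "x \<in> set (drop i xs) \<Longrightarrow> \<exists>j. i \<le> j \<and> j < length xs \<and> x = xs ! j"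
  by (auto simp: in_set_conv_nth) (metis add.commute le_add1 less_diff_conv)

lemma succ_drop: "successively R xs \<Longrightarrow> successively R (drop i xs)"
  by (metis append_take_drop_id successively_append_iff)

lemma cyc_lemma:
  assumes r: "r < n"
  and P: "is_walk n E P" "hd P = r" "length P = Suc k" "\<forall>i<Suc k. D r (P!i) = i"
  and Q: "is_walk n E Q" "hd Q = r" "length Q = Suc k" "\<forall>i<Suc k. D r (Q!i) = i"
  and ne: "P!k \<noteq> Q!k"
  and C: "set C \<inter> (set P \<union> set Q) = {}" "distinct C" "set C \<subseteq> {..<n}"
    "successively E (P!k # C @ [Q!k])"
  shows False
proof -
  define I where "I = {i. i \<le> k \<and> P!i = Q!i}"
  have P0: "P ! 0 = r" using P by (cases P) auto
  have Q0: "Q ! 0 = r" using Q by (cases Q) auto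
  have "0 \<in> I" unfolding I_def using P0 Q0 by simp
  have fI: "finite I" unfolding I_def by simp
  define i where "i = Max I"
  have iI: "i \<in> I" unfolding i_def using fI \<open>0 \<in> I\<close> Max_in by blast
  then have ik: "i < k" using ne unfolding I_def using le_neq_implies_less by blast
  have Pi: "P ! i = Q ! i" using iI unfolding I_def by simp
  have maxI: "j \<le> i" if "j \<in> I" for j using that fI unfolding i_def by simp
  have disj: "P ! j1 \<noteq> Q ! j2" if "i \<le> j1" "j1 \<le> k" "i < j2" "j2 \<le> k" for j1 j2
  proof
    assume eq: "P ! j1 = Q ! j2"
    then have "j1 = j2" using P(4) Q(4) that by (metis less_Suc_eq_le)
    then have "j2 \<in> I" using eq that unfolding I_def by simp
    then show False using maxI that by force
  qed
  define cyc where "cyc = drop i P @ C @ rev (drop (Suc i) Q)"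
  have dP: "distinct P" unfolding distinct_conv_nth using P(3,4) by metis
  have dQ: "distinct Q" unfolding distinct_conv_nth using Q(3,4) by metis
  have "set (drop i P) \<inter> set (drop (Suc i) Q) = {}"
  proof (rule ccontr)
    assume "set (drop i P) \<inter> set (drop (Suc i) Q) \<noteq> {}"
    then obtain x where x1: "x \<in> set (drop i P)" and x2: "x \<in> set (drop (Suc i) Q)" by blast
    obtain j1 where j1: "i \<le> j1" "j1 < length P" "x = P ! j1" using in_set_drop_nth[OF x1] by blast
    obtain j2 where j2: "Suc i \<le> j2" "j2 < length Q" "x = Q ! j2" using in_set_drop_nth[OF x2] by blast
    show False using disj[of j1 j2] j1 j2 P(3) Q(3) by simp
  qed
  moreover have "set C \<inter> set (drop i P) = {}" "set C \<inter> set (drop (Suc i) Q) = {}"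
    using C(1) by (auto dest: in_set_dropD)
  ultimately have dc: "distinct cyc" unfolding cyc_def using dP dQ C(2) by auto
  have lc: "length cyc \<ge> 3" unfolding cyc_def using ik P(3) Q(3) by simp
  have lastP: "last (drop i P) = P ! k" using ik P(3) by (simp add: last_conv_nth)
  have hdQ: "hd (rev (drop (Suc i) Q)) = Q ! k" using ik Q(3) by (simp add: hd_rev last_conv_nth)
  have lastQ: "last (rev (drop (Suc i) Q)) = Q ! Suc i" using ik Q(3) by (simp add: last_rev hd_drop_conv_nth)
  have neQ: "drop (Suc i) Q \<noteq> []" using ik Q(3) by simp
  have sP: "successively E (drop i P)" using P(1) walk_iff succ_drop by blast
  have sQ: "successively E (rev (drop (Suc i) Q))"
  proof -
    have "successively E (drop (Suc i) Q)" using Q(1) walk_iff succ_drop by blast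
    then show ?thesis by (auto intro: successively_mono dest: sg)
  qed
  have "successively E cyc"
  proof (cases "C = []")
    case True
    then have "E (P!k) (Q!k)" using C(4) by simp
    then show ?thesis unfolding cyc_def using True sP sQ lastP hdQ neQ
      by (simp add: successively_append_iff)
  next
    case False
    then have "E (P!k) (hd C)" "E (last C) (Q!k)" "successively E C" using C(4)
      by (auto simp: successively_append_iff successively_Cons)
    then show ?thesis unfolding cyc_def using False sP sQ lastP hdQ neQ
      by (simp add: successively_append_iff)
  qed
  moreover have "set cyc \<subseteq> {..<n}" unfolding cyc_def using P(1) Q(1) C(3) unfolding walk_iff
    by (auto dest: in_set_dropD)
  ultimately have wc: "is_walk n E cyc" using lc unfolding walk_iff by auto
  have "E (Q ! Suc i) (Q ! i)" using Q(1) ik Q(3) unfolding is_walk_def using sg by simp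
  then have "E (last cyc) (hd cyc)" unfolding cyc_def using lastQ neQ Pi ik P(3)
    by (simp add: hd_drop_conv_nth)
  then have "is_cycle n E cyc" unfolding is_cycle_def using wc lc dc by simp
  then show False using nocyc by blast
qed


lemma sp_ex: assumes "r < n" "v < n"
  shows "\<exists>p. is_walk n E p \<and> hd p = r \<and> last p = v \<and> length p = Suc (D r v)
     \<and> (\<forall>i<Suc (D r v). D r (p!i) = i) \<and> p ! (D r v) = v"
proof -
  obtain p where p: "is_walk n E p" "hd p = r" "last p = v" "length p = Suc (D r v)"
    using dist_ex assms by blast
  moreover have "\<forall>i<Suc (D r v). D r (p!i) = i" using shortest_nth[of p r] p by simp
  moreover have "p ! (D r v) = v" using p by (metis diff_Suc_1 last_conv_nth list.size(3) nat.distinct(1))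
  ultimately show ?thesis by blast
qed

lemma no_eq_edge: assumes "r < n" "E v w" shows "D r v \<noteq> D r w"
proof
  assume eq: "D r v = D r w"
  have vw: "v < n" "w < n" "v \<noteq> w" using sg assms by auto
  obtain P where P: "is_walk n E P" "hd P = r" "length P = Suc (D r v)"
     "\<forall>i<Suc (D r v). D r (P!i) = i" "P ! (D r v) = v" using sp_ex assms vw by blast
  obtain Q where Q: "is_walk n E Q" "hd Q = r" "length Q = Suc (D r v)"
     "\<forall>i<Suc (D r v). D r (Q!i) = i" "Q ! (D r v) = w" using sp_ex[of r w] assms vw eq by auto
  show False
    by (rule cyc_lemma[OF assms(1) P(1-4) Q(1-4), of "[]"]) (use P(5) Q(5) vw assms in auto)
qed

lemma uniq_parent: assumes "r < n" "E v w1" "E v w2" "D r w1 + 1 = D r v" "D r w2 + 1 = D r v"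
  shows "w1 = w2"
proof (rule ccontr)
  assume ne: "w1 \<noteq> w2"
  have vw: "v < n" "w1 < n" "w2 < n" using sg assms by auto
  obtain P where P: "is_walk n E P" "hd P = r" "length P = Suc (D r w1)"
     "\<forall>i<Suc (D r w1). D r (P!i) = i" "P ! (D r w1) = w1" using sp_ex assms vw by blast
  obtain Q where Q: "is_walk n E Q" "hd Q = r" "length Q = Suc (D r w1)"
     "\<forall>i<Suc (D r w1). D r (Q!i) = i" "Q ! (D r w1) = w2"
  proof -
    have eqd: "D r w2 = D r w1" using assms(4,5) by simp
    show ?thesis using that sp_ex[of r w2] assms(1) vw unfolding eqd by blast
  qed
  have "v \<notin> set P"
  proof
    assume "v \<in> set P"
    then obtain j where "j < length P" "P ! j = v" by (auto simp: in_set_conv_nth)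
    then show False using P(3,4) assms(4) by auto
  qed
  moreover have "v \<notin> set Q"
  proof
    assume "v \<in> set Q"
    then obtain j where "j < length Q" "Q ! j = v" by (auto simp: in_set_conv_nth)
    then show False using Q(3,4) assms(4) by auto
  qed
  ultimately show False
    by (intro cyc_lemma[OF assms(1) P(1-4) Q(1-4), of "[v]"]) (use P(5) Q(5) vw assms ne sg in auto)
qed

lemma parent_ex: assumes "r < n" "v < n" "v \<noteq> r" shows "\<exists>w. E v w \<and> D r w + 1 = D r v"
proof -
  obtain P where P: "is_walk n E P" "hd P = r" "length P = Suc (D r v)"
     "\<forall>i<Suc (D r v). D r (P!i) = i" "P ! (D r v) = v" using sp_ex assms by blast
  have "D r v \<noteq> 0" using assms D_zero by blast
  then obtain k where k: "D r v = Suc k" by (cases "D r v") auto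
  have "E (P ! k) (P ! Suc k)" using P(1,3) k unfolding is_walk_def by simp
  then have "E v (P ! k)" using P(5) k sg by simp
  moreover have "D r (P ! k) = k" using P(4) k by simp
  ultimately show ?thesis using k by auto
qed

lemma card_sum: "card {u. u < n \<and> R u} = (\<Sum>u<n. if R u then 1 else 0)"
proof -
  have "{u. u < n \<and> R u} = {u \<in> {..<n}. R u}" by auto
  then show ?thesis by (simp add: sum.inter_filter[symmetric])
qed

lemma deg_sum: assumes r: "r < n" shows "(\<Sum>v<n. degree n E v) = 2 * (n - 1)"
proof -
  let ?a = "\<lambda>v u. (if E v u \<and> D r u < D r v then 1 else 0) :: nat"
  have split: "(if E v u then 1 else 0) = ?a v u + ?a u v" for v u
    using no_eq_edge[OF r, of v u] sg[of v u] sg[of u v] by auto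
  have one: "(\<Sum>u<n. ?a v u) = (if v = r then 0 else 1)" if v: "v < n" for v
  proof -
    have "(\<Sum>u<n. ?a v u) = card {u. u < n \<and> E v u \<and> D r u < D r v}"
      using card_sum[of "\<lambda>u. E v u \<and> D r u < D r v"] by simp
    also have "\<dots> = (if v = r then 0 else 1)"
    proof (cases "v = r")
      case True
      have "D r r = 0" using dist_le[of "[r]" r r] r unfolding is_walk_def by simp
      then show ?thesis using True by simp
    next
      case False
      obtain w where w: "E v w" "D r w + 1 = D r v" using parent_ex r v False by blast
      have "{u. u < n \<and> E v u \<and> D r u < D r v} = {w}"
      proof safe
        fix u assume u: "u < n" "E v u" "D r u < D r v"
        have "D r v \<le> D r u + 1" using D_edge[OF r, of u v] u sg by simp
        then show "u = w" using uniq_parent[OF r u(2) w(1) _ w(2)] u by simp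
      qed (use w sg in auto)
      then show ?thesis using False by simp
    qed
    finally show ?thesis .
  qed
  have "(\<Sum>v<n. degree n E v) = (\<Sum>v<n. \<Sum>u<n. ?a v u + ?a u v)"
    unfolding degree_def card_sum split by simp
  also have "\<dots> = (\<Sum>v<n. \<Sum>u<n. ?a v u) + (\<Sum>v<n. \<Sum>u<n. ?a u v)"
    by (simp add: sum.distrib)
  also have "(\<Sum>v<n. \<Sum>u<n. ?a u v) = (\<Sum>u<n. \<Sum>v<n. ?a u v)"
    by (rule sum.swap)
  also have "(\<Sum>v<n. \<Sum>u<n. ?a v u) = (\<Sum>v<n. (if v = r then 0 else 1))"
    using one by simp
  also have "(\<Sum>v<n. (if v = r then 0 else 1::nat)) = n - 1"
  proof -
    have "(\<Sum>v<n. (if v = r then 0 else 1::nat)) = (\<Sum>v\<in>{..<n} - {r}. 1)"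
      by (rule sum.mono_neutral_cong_right) auto
    then show ?thesis using r by simp
  qed
  finally show ?thesis by simp
qed

end


locale spider = tctx +
  fixes u1 u2 u3 m :: nat
  assumes pend: "{v. pendant n E v} = {u1, u2, u3}"
    and dst: "distinct [u1, u2, u3]"
    and maj: "major n E m"
    and d1: "D u1 m mod 3 = 1"
    and d2: "D u2 m mod 3 = 1"
begin

definition nbs where "nbs v = {u. u < n \<and> E v u}"

lemma fin_nbs[simp]: "finite (nbs v)" unfolding nbs_def by simp

lemma deg_nbs: "degree n E v = card (nbs v)" unfolding degree_def nbs_def by simp

lemma leaves: "u1 < n" "u2 < n" "u3 < n" "degree n E u1 = 1" "degree n E u2 = 1" "degree n E u3 = 1"
  using pend unfolding pendant_def by blast+

lemma m_facts: "m < n" "degree n E m \<ge> 3" "m \<noteq> u1" "m \<noteq> u2" "m \<noteq> u3"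
  using maj leaves unfolding major_def by auto

lemma n2: "n \<ge> 2"
proof -
  have "nbs m \<subseteq> {..<n}" unfolding nbs_def by auto
  then have "card (nbs m) \<le> card {..<n}" by (intro card_mono) auto
  then have "card (nbs m) \<le> n" by simp
  moreover have "card (nbs m) \<ge> 3" using m_facts(2) deg_nbs by simp
  ultimately show ?thesis by linarith
qed

lemma deg_pos: assumes "v < n" shows "degree n E v \<ge> 1"
proof -
  define w :: nat where "w = (if v = 0 then 1 else 0)"
  have w: "w < n" "w \<noteq> v" unfolding w_def using n2 by auto
  obtain p where p: "is_walk n E p" "hd p = v" "last p = w" using conn assms w by blast
  have "length p \<ge> 2"
  proof (rule ccontr)
    assume "\<not> length p \<ge> 2"
    moreover have "length p > 0" using p(1) unfolding is_walk_def by simp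
    ultimately have "length p = 1" by linarith
    then have "last p = hd p" using p(1) unfolding is_walk_def by (simp add: last_conv_nth hd_conv_nth)
    then show False using p w by simp
  qed
  then have "E (p ! 0) (p ! 1)" using p(1) unfolding is_walk_def by simp
  moreover have "p ! 0 = v" using p(1,2) unfolding is_walk_def by (simp add: hd_conv_nth)
  ultimately have "p ! 1 \<in> nbs v" unfolding nbs_def using sg by blast
  then have "card (nbs v) \<ge> 1" using fin_nbs[of v] card_gt_0_iff[of "nbs v"] by auto
  then show ?thesis using deg_nbs by simp
qed

lemma deg_le2: assumes "v0 < n" "v0 \<noteq> m" shows "degree n E v0 \<le> 2"
proof (rule ccontr)
  assume "\<not> degree n E v0 \<le> 2"
  then have v03: "degree n E v0 \<ge> 3" by simp
  define A where "A = {u1, u2, u3}"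
  define h where "h v = (if v \<in> A then 1 else if v = m \<or> v = v0 then 3 else 2::nat)" for v
  have "h v \<le> degree n E v" if "v < n" for v
  proof -
    have "v \<notin> A \<Longrightarrow> degree n E v \<noteq> 1" using pend that unfolding A_def pendant_def by blast
    then show ?thesis unfolding h_def using deg_pos[OF that] v03 m_facts by auto
  qed
  then have "(\<Sum>v<n. h v) \<le> (\<Sum>v<n. degree n E v)" by (intro sum_mono) simp
  also have "\<dots> = 2 * (n - 1)" using deg_sum m_facts by blast
  finally have le: "(\<Sum>v<n. h v) \<le> 2 * (n - 1)" .
  have v0A: "v0 \<notin> A" using v03 leaves unfolding A_def by auto
  have mA: "m \<notin> A" using m_facts unfolding A_def by auto
  have An: "A \<subseteq> {..<n}" using leaves unfolding A_def by auto
  have cA: "card A = 3" using dst unfolding A_def by simp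
  have hh: "h v + (if v \<in> A then 1 else 0) = 2 + (if v = m then 1 else 0) + (if v = v0 then 1 else 0)" for v
    unfolding h_def using v0A mA assms by auto
  have "(\<Sum>v<n. h v) + (\<Sum>v<n. if v \<in> A then 1 else 0) = (\<Sum>v<n. 2 + (if v = m then 1 else 0) + (if v = v0 then 1 else 0))"
    unfolding sum.distrib[symmetric] hh by simp
  also have "\<dots> = (\<Sum>v<n. 2) + (\<Sum>v<n. if v = m then 1 else 0) + (\<Sum>v<n. if v = v0 then 1 else 0)"
    by (simp only: sum.distrib)
  also have "\<dots> = 2 * n + 2"
  proof -
    have "(\<Sum>v<n. if v = m then 1 else 0::nat) = 1" using m_facts by simp
    moreover have "(\<Sum>v<n. if v = v0 then 1 else 0::nat) = 1" using assms by simp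
    ultimately show ?thesis by simp
  qed
  finally have eq: "(\<Sum>v<n. h v) + (\<Sum>v<n. if v \<in> A then 1 else 0) = 2 * n + 2" .
  have "(\<Sum>v<n. if v \<in> A then 1 else 0::nat) = card ({..<n} \<inter> A)"
    by (simp add: sum.If_cases)
  also have "\<dots> = 3" using An cA by (simp add: Int_absorb1)
  finally show False using eq le n2 by simp
qed


abbreviation L where "L \<equiv> D u1 u2"

definition P where "P = (SOME p. is_walk n E p \<and> hd p = u1 \<and> last p = u2 \<and> length p = Suc L
     \<and> (\<forall>i<Suc L. D u1 (p!i) = i) \<and> p ! L = u2)"

lemma P_props: "is_walk n E P" "hd P = u1" "last P = u2" "length P = Suc L"
     "\<forall>i<Suc L. D u1 (P!i) = i" "P ! L = u2"
proof -
  have "\<exists>p. is_walk n E p \<and> hd p = u1 \<and> last p = u2 \<and> length p = Suc L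
     \<and> (\<forall>i<Suc L. D u1 (p!i) = i) \<and> p ! L = u2" using sp_ex leaves by blast
  then have "is_walk n E P \<and> hd P = u1 \<and> last P = u2 \<and> length P = Suc L
     \<and> (\<forall>i<Suc L. D u1 (P!i) = i) \<and> P ! L = u2" unfolding P_def by (rule someI_ex)
  then show "is_walk n E P" "hd P = u1" "last P = u2" "length P = Suc L"
     "\<forall>i<Suc L. D u1 (P!i) = i" "P ! L = u2" by blast+
qed

lemma P0: "P ! 0 = u1" using P_props(1,2) unfolding is_walk_def by (simp add: hd_conv_nth)

lemma Lpos: "L \<ge> 1"
proof (rule ccontr)
  assume "\<not> L \<ge> 1"
  then have "L = 0" by simp
  then show False using P0 P_props(6) dst by simp
qed

lemma P_lt: "i \<le> L \<Longrightarrow> P ! i < n"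
  using P_props(1,4) unfolding is_walk_def by (metis less_Suc_eq_le nth_mem)

lemma P_D: "i \<le> L \<Longrightarrow> D u1 (P ! i) = i" using P_props(5) by simp

lemma P_inj: "i \<le> L \<Longrightarrow> j \<le> L \<Longrightarrow> P ! i = P ! j \<Longrightarrow> i = j" using P_D by metis

lemma P_idx: "v \<in> set P \<Longrightarrow> D u1 v \<le> L \<and> P ! (D u1 v) = v"
proof -
  assume "v \<in> set P"
  then obtain j where "j < length P" "P ! j = v" by (auto simp: in_set_conv_nth)
  then show ?thesis using P_D P_props(4) by (metis less_Suc_eq_le)
qed

lemma P_adj: "j < L \<Longrightarrow> E (P!j) (P!Suc j) \<and> E (P!Suc j) (P!j)"
  using P_props(1,4) sg unfolding is_walk_def by simp

lemma P_nb_in: assumes "k \<le> L" "j \<le> L" "E (P!k) (P!j)" shows "j = Suc k \<or> k = Suc j"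
proof -
  have "D u1 (P!j) \<le> D u1 (P!k) + 1" using D_edge[OF leaves(1) assms(3)] .
  moreover have "D u1 (P!k) \<le> D u1 (P!j) + 1" using D_edge[OF leaves(1)] assms(3) sg by blast
  moreover have "j \<noteq> k" using assms sg by blast
  ultimately have "j \<le> Suc k" "k \<le> Suc j" "j \<noteq> k" using P_D assms by simp_all
  then show ?thesis by linarith
qed

lemma nb_sub: "P ! Suc k \<in> nbs (P ! k)" "P ! k \<in> nbs (P ! Suc k)" if "k < L"
  using P_adj[OF that] P_lt that unfolding nbs_def by auto

lemma card1: assumes "card A = 1" "x \<in> A" shows "A = {x}"
  using assms by (metis card_1_singletonE singletonD)

lemma nb0: "nbs u1 = {P ! 1}"
  using card1[of "nbs u1" "P ! 1"] leaves(4) deg_nbs nb_sub(1)[of 0] Lpos P0 by simp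

lemma nbL: "nbs u2 = {P ! (L - 1)}"
proof -
  have "P ! (L - 1) \<in> nbs (P ! L)" using nb_sub(2)[of "L - 1"] Lpos by simp
  then show ?thesis using card1[of "nbs u2" "P ! (L-1)"] leaves(5) deg_nbs P_props(6) by simp
qed

lemma nbk: assumes "0 < k" "k < L" "P ! k \<noteq> m" shows "nbs (P ! k) = {P ! (k - 1), P ! Suc k}"
proof -
  have sub: "{P ! (k - 1), P ! Suc k} \<subseteq> nbs (P ! k)"
    using nb_sub(1)[of k] nb_sub(2)[of "k - 1"] assms by simp
  have "P ! (k - 1) \<noteq> P ! Suc k" using P_inj[of "k - 1" "Suc k"] assms by fastforce
  then have c2: "card {P ! (k - 1), P ! Suc k} = 2" by simp
  have "card (nbs (P ! k)) \<le> 2" using deg_le2[of "P ! k"] assms P_lt deg_nbs by simp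
  then show ?thesis using card_seteq[OF fin_nbs sub] c2 by simp
qed

lemma closure: assumes "v \<in> set P" "v \<noteq> m" shows "nbs v \<subseteq> set P"
proof -
  define k where "k = D u1 v"
  have k: "k \<le> L" "P ! k = v" using P_idx[OF assms(1)] unfolding k_def by auto
  have mem: "P ! j \<in> set P" if "j \<le> L" for j using that P_props(4) by simp
  show ?thesis
  proof (cases "k = 0")
    case True then show ?thesis using k nb0 P0 mem Lpos by simp
  next
    case False
    show ?thesis
    proof (cases "k = L")
      case True then show ?thesis using k nbL P_props(6) mem by simp
    next
      case False
      then show ?thesis using nbk[of k] \<open>k \<noteq> 0\<close> k assms(2) mem by simp
    qed
  qed
qed

lemma m_in: "m \<in> set P"
proof (rule ccontr)
  assume nm: "m \<notin> set P"
  obtain w where w: "is_walk n E w" "hd w = u1" "last w = m" using conn leaves m_facts by blast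
  have "\<forall>i. i < length w \<longrightarrow> w ! i \<in> set P"
  proof (intro allI)
    fix i show "i < length w \<longrightarrow> w ! i \<in> set P"
    proof (induction i)
      case 0
      then show ?case using w(1,2) P0 P_props(4) unfolding is_walk_def
        by (metis hd_conv_nth nth_mem zero_less_Suc)
    next
      case (Suc i)
      show ?case
      proof
        assume si: "Suc i < length w"
        then have wi: "w ! i \<in> set P" using Suc by simp
        have "w ! Suc i \<in> nbs (w ! i)" using w(1) si unfolding is_walk_def nbs_def by auto
        then show "w ! Suc i \<in> set P" using closure[OF wi] wi nm by blast
      qed
    qed
  qed
  then have "last w \<in> set P" using w(1) unfolding is_walk_def by (simp add: last_conv_nth)
  then show False using w(3) nm by simp
qed

abbreviation km where "km \<equiv> D u1 m"

lemma km: "0 < km" "km < L" "P ! km = m"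
proof -
  have a: "km \<le> L" "P ! km = m" using P_idx[OF m_in] by auto
  show "P ! km = m" using a by simp
  show "0 < km" using a P0 m_facts by (metis neq0_conv)
  show "km < L" using a P_props(6) m_facts by (metis le_neq_implies_less)
qed

lemma Lmod: "L mod 3 = 2"
proof -
  have "D m u2 \<le> length (drop km P) - 1"
  proof (rule dist_le)
    show "is_walk n E (drop km P)" using walk_drop P_props km by simp
    show "hd (drop km P) = m" using km P_props(4) by (simp add: hd_drop_conv_nth)
    show "last (drop km P) = u2" using km P_props(3,4) by simp
  qed
  then have "D m u2 \<le> L - km" using P_props(4) by simp
  moreover have "L \<le> km + D m u2" using D_tri leaves m_facts by blast
  moreover have "D m u2 = D u2 m" using D_sym leaves m_facts by blast
  ultimately have "L = km + D u2 m" using km by linarith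
  then show ?thesis using d1 d2 by presburger
qed


end

definition g :: "nat \<Rightarrow> real" where
  "g k = (if k mod 6 = 0 \<or> k mod 6 = 5 then 1 else if k mod 6 = 2 \<or> k mod 6 = 3 then -1 else 0)"

lemma g_rec: "g (Suc (Suc k)) = g (Suc k) - g k"
proof -
  have "k mod 6 < 6" by simp
  then have "k mod 6 = 0 \<or> k mod 6 = 1 \<or> k mod 6 = 2 \<or> k mod 6 = 3 \<or> k mod 6 = 4 \<or> k mod 6 = 5" by linarith
  then show ?thesis unfolding g_def by (auto simp: mod_Suc)
qed

lemma g_zero: "k mod 3 = 1 \<Longrightarrow> g k = 0"
proof -
  assume a: "k mod 3 = 1"
  have "k mod 6 mod 3 = 1" using a by (simp add: mod_mod_cancel)
  moreover have "k mod 6 < 6" by simp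
  then have "k mod 6 = 0 \<or> k mod 6 = 1 \<or> k mod 6 = 2 \<or> k mod 6 = 3 \<or> k mod 6 = 4 \<or> k mod 6 = 5" by linarith
  ultimately have "k mod 6 = 1 \<or> k mod 6 = 4" by auto
  then show ?thesis unfolding g_def by auto
qed

lemma g0: "g 0 = 1" unfolding g_def by simp

lemma lap_mult: assumes "v < n" "x \<in> carrier_vec n"
  shows "(laplacian n E *\<^sub>v x) $ v = real (degree n E v) * x $ v - (\<Sum>u\<in>{u. u < n \<and> E v u}. x $ u)"
proof -
  have "(laplacian n E *\<^sub>v x) $ v = (\<Sum>j<n. (real (if v = j then degree n E v else 0) - (if E v j then 1 else 0)) * x $ j)"
    using assms by (simp add: laplacian_def scalar_prod_def lessThan_atLeast0)
  also have "\<dots> = (\<Sum>j<n. (if v = j then real (degree n E v) * x $ j else 0)) - (\<Sum>j<n. if E v j then x $ j else 0)"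
  proof -
    have "(\<Sum>j<n. (real (if v = j then degree n E v else 0) - (if E v j then 1 else 0)) * x $ j)
       = (\<Sum>j<n. (if v = j then real (degree n E v) * x $ j else 0) - (if E v j then x $ j else 0))"
      by (rule sum.cong) (auto simp: algebra_simps)
    then show ?thesis by (simp add: sum_subtractf)
  qed
  also have "(\<Sum>j<n. (if v = j then real (degree n E v) * x $ j else 0)) = real (degree n E v) * x $ v"
    using assms by simp
  also have "(\<Sum>j<n. if E v j then x $ j else 0) = (\<Sum>u\<in>{u. u < n \<and> E v u}. x $ u)"
  proof -
    have "{u. u < n \<and> E v u} = {u \<in> {..<n}. E v u}" by auto
    then show ?thesis using sum.inter_filter[of "{..<n}" "\<lambda>u. x $ u" "E v"] by simp
  qed
  finally show ?thesis .
qed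


context spider begin

definition xv where "xv = vec n (\<lambda>v. if v \<in> set P then g (D u1 v) else 0)"

lemma xv_car: "xv \<in> carrier_vec n" unfolding xv_def by simp

lemma Pmem: "j \<le> L \<Longrightarrow> P ! j \<in> set P" using P_props(4) by simp

lemma xv_P: "j \<le> L \<Longrightarrow> xv $ (P!j) = g j"
  unfolding xv_def using P_lt Pmem P_D by simp

lemma xv_out: "v < n \<Longrightarrow> v \<notin> set P \<Longrightarrow> xv $ v = 0"
  unfolding xv_def by simp

lemma xv_m: "xv $ m = 0"
  using xv_P[of km] km g_zero d1 by simp

lemma eqn: assumes v: "v < n"
  shows "real (degree n E v) * xv $ v - (\<Sum>u\<in>nbs v. xv $ u) = xv $ v"
proof (cases "v \<in> set P")
  case False
  have "xv $ u = 0" if u: "u \<in> nbs v" for u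
  proof (cases "u \<in> set P \<and> u \<noteq> m")
    case True
    then have "nbs u \<subseteq> set P" using closure by blast
    moreover have "v \<in> nbs u" using u v sg unfolding nbs_def by auto
    ultimately show ?thesis using False by blast
  next
    case False
    then show ?thesis using xv_m xv_out u unfolding nbs_def by auto
  qed
  then show ?thesis using xv_out[OF v False] by simp
next
  case True
  define k where "k = D u1 v"
  have k: "k \<le> L" "P ! k = v" using P_idx[OF True] unfolding k_def by auto
  show ?thesis
  proof (cases "v = m")
    case True
    then have kk: "k = km" unfolding k_def by simp
    obtain j where j: "km = Suc j" using km(1) by (cases km) auto
    let ?S = "{P ! j, P ! Suc km}"
    have sub: "?S \<subseteq> nbs m" using nb_sub(1)[of km] nb_sub(2)[of j] km j by auto
    have zero: "xv $ u = 0" if u: "u \<in> nbs m - ?S" for u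
    proof (cases "u \<in> set P")
      case True
      define i where "i = D u1 u"
      have i: "i \<le> L" "P ! i = u" using P_idx[OF True] unfolding i_def by auto
      have "E (P ! km) (P ! i)" using u i km unfolding nbs_def by auto
      then have "i = Suc km \<or> km = Suc i" using P_nb_in[of km i] km i by simp
      then show ?thesis using u i j by auto
    next
      case False
      then show ?thesis using xv_out u unfolding nbs_def by auto
    qed
    have ne: "P ! j \<noteq> P ! Suc km" using P_inj[of j "Suc km"] j km by fastforce
    have "(\<Sum>u\<in>nbs m. xv $ u) = (\<Sum>u\<in>?S. xv $ u)"
      using sum.mono_neutral_right[OF fin_nbs sub] zero by blast
    also have "\<dots> = g j + g (Suc km)" using ne xv_P[of j] xv_P[of "Suc km"] km j by simp
    also have "\<dots> = 0" using g_rec[of j] j g_zero[of km] d1 by simp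
    finally show ?thesis using True xv_m by simp
  next
    case False
    show ?thesis
    proof (cases "k = 0")
      case True
      then have vu: "v = u1" using k P0 by simp
      have "(\<Sum>u\<in>nbs v. xv $ u) = xv $ (P ! 1)" using nb0 vu by simp
      also have "\<dots> = 0" using xv_P[of 1] Lpos g_zero[of 1] by simp
      finally have s0: "(\<Sum>u\<in>nbs v. xv $ u) = 0" .
      have "degree n E v = 1" using vu leaves(4) by simp
      then show ?thesis using s0 by simp
    next
      case k0: False
      show ?thesis
      proof (cases "k = L")
        case True
        then have vu: "v = u2" using k P_props(6) by simp
        have e: "L = 3 * (L div 3) + 2" using div_mult_mod_eq[of L 3] Lmod by linarith
        have "L - 1 = 1 + 3 * (L div 3)" using e by linarith
        then have "(L - 1) mod 3 = 1" by simp
        then have g1: "g (L - 1) = 0" using g_zero by blast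
        have "(\<Sum>u\<in>nbs v. xv $ u) = xv $ (P ! (L - 1))" using nbL vu by simp
        also have "\<dots> = 0" using xv_P[of "L - 1"] g1 by simp
        finally have s0: "(\<Sum>u\<in>nbs v. xv $ u) = 0" .
        have "degree n E v = 1" using vu leaves(5) by simp
        then show ?thesis using s0 by simp
      next
        case kL: False
        obtain j where j: "k = Suc j" using k0 by (cases k) auto
        have nb: "nbs v = {P ! j, P ! Suc k}" using nbk[of k] k0 kL k False j by simp
        have ne: "P ! j \<noteq> P ! Suc k" using P_inj[of j "Suc k"] j k kL by fastforce
        have "card (nbs v) = 2" using nb ne by simp
        moreover have "(\<Sum>u\<in>nbs v. xv $ u) = g j + g (Suc k)"
          using nb ne xv_P[of j] xv_P[of "Suc k"] j k kL by simp
        moreover have "xv $ v = g k" using xv_P[of k] k by simp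
        moreover have "degree n E v = card (nbs v)" by (rule deg_nbs)
        ultimately show ?thesis using g_rec[of j] j by simp
      qed
    qed
  qed
qed

lemma eig: "eigenvalue (laplacian n E) 1"
proof -
  have dim: "dim_row (laplacian n E) = n" unfolding laplacian_def by simp
  have "xv $ u1 = 1" using xv_P[of 0] P0 g0 by simp
  then have nz: "xv \<noteq> 0\<^sub>v n" using leaves(1) by auto
  have "laplacian n E *\<^sub>v xv = 1 \<cdot>\<^sub>v xv"
  proof (rule eq_vecI)
    show "dim_vec (laplacian n E *\<^sub>v xv) = dim_vec (1 \<cdot>\<^sub>v xv)" using dim xv_car by simp
    fix i assume "i < dim_vec (1 \<cdot>\<^sub>v xv)"
    then have i: "i < n" using xv_car by simp
    show "(laplacian n E *\<^sub>v xv) $ i = (1 \<cdot>\<^sub>v xv) $ i"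
      using lap_mult[OF i xv_car] eqn[OF i] i xv_car unfolding nbs_def by simp
  qed
  then show ?thesis unfolding eigenvalue_def eigenvector_def using dim xv_car nz by auto
qed

end

theorem mainTheorem4:
  fixes n :: nat and E :: "nat \<Rightarrow> nat \<Rightarrow> bool" and u1 u2 u3 m :: nat
  assumes "is_tree n E"
    and "{v. pendant n E v} = {u1, u2, u3}"
    and "distinct [u1, u2, u3]"
    and "major n E m"
    and "dist_graph n E u1 m mod 3 = 1"
    and "dist_graph n E u2 m mod 3 = 1"
  shows "eigenvalue (laplacian n E) 1"
proof -
  interpret spider n E u1 u2 u3 m
    using assms by (unfold_locales) auto
  show ?thesis by (rule eig)
qed

end
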